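(* For every $n\geq 5$, the alternating group $A_n$ is $D$-realisable but not completely $D$-realisable.
   Context: All groups are finite. $D(H)=H'$ denotes the derived subgroup of $H$. A finite group $G$ is $D$-realisable if there is a finite group $H$ with $G\cong D(H)$. It is completely $D$-realisable if there is a finite group $H$ such that: (i) $G\cong D(H)$; (ii) for every subgroup $G_1\leq G$ there exists $H_1\leq H$ with $G_1\cong D(H_1)$; (iii) for every $H_1\leq H$ there exists $G_1\leq G$ with $D(H_1)\cong G_1$. *)

theory Defs
  imports "HOL-Algebra.Algebra"
begin

definition derived_group :: "('a, 'b) monoid_scheme \<Rightarrow> ('a, 'b) monoid_scheme" where
  "derived_group H = H\<lparr>carrier := derived H (carrier H)\<rparr>"

text \<open>Finite groups H are quantified over with carrier type nat; every finite
  group is isomorphic to such a group, and all notions are isomorphism-invariant.\<close>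
definition D_realisable :: "('a, 'b) monoid_scheme \<Rightarrow> bool" where
  "D_realisable G \<longleftrightarrow>
     (\<exists>H :: nat monoid. group H \<and> finite (carrier H) \<and> derived_group H \<cong> G)"

definition completely_D_realisable :: "('a, 'b) monoid_scheme \<Rightarrow> bool" where
  "completely_D_realisable G \<longleftrightarrow>
     (\<exists>H :: nat monoid. group H \<and> finite (carrier H) \<and> derived_group H \<cong> G \<and>
        (\<forall>G1. subgroup G1 G \<longrightarrow>
           (\<exists>H1. subgroup H1 H \<and> derived_group (H\<lparr>carrier := H1\<rparr>) \<cong> G\<lparr>carrier := G1\<rparr>)) \<and>
        (\<forall>H1. subgroup H1 H \<longrightarrow>
           (\<exists>G1. subgroup G1 G \<and> derived_group (H\<lparr>carrier := H1\<rparr>) \<cong> G\<lparr>carrier := G1\<rparr>)))"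

end

theory Submission
  imports Defs
begin


lemma perfect_D_realisable:
  fixes G :: "('a, 'b) monoid_scheme"
  assumes grp: "group G" and fin: "finite (carrier G)"
    and perf: "derived G (carrier G) = carrier G"
  shows "D_realisable G"
proof -
  interpret G: group G by fact
  obtain g :: "'a \<Rightarrow> nat" and k where gk: "g ` carrier G = {i. i<k}" "inj_on g (carrier G)"
    using finite_imp_inj_to_nat_seg[OF fin] by blast
  define A where "A = carrier G"
  define H :: "nat monoid" where "H = monoid.make (g ` A)
     (\<lambda>a b. g (inv_into A g a \<otimes>\<^bsub>G\<^esub> inv_into A g b)) (g \<one>\<^bsub>G\<^esub>)"
  have inj: "inj_on g A" using gk A_def by simp
  have iso: "g \<in> iso G H"
    unfolding iso_def hom_def bij_betw_def
    using inj by (auto simp: H_def monoid.defs A_def inv_into_f_f)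
  have grpH0: "group (H\<lparr>one := g \<one>\<^bsub>G\<^esub>\<rparr>)" using G.iso_imp_img_group[OF iso] .
  have "H\<lparr>one := g \<one>\<^bsub>G\<^esub>\<rparr> = H" by (simp add: H_def monoid.defs)
  with grpH0 have grpH: "group H" by simp
  have hom: "group_hom G H g"
    using iso grpH unfolding group_hom_def group_hom_axioms_def iso_def by (auto intro: grp)
  have "derived H (carrier H) = carrier H"
  proof -
    have "carrier H = g ` carrier G" by (simp add: H_def monoid.defs A_def)
    then show ?thesis using group_hom.derived_img[OF hom, of "carrier G"] perf by simp
  qed
  then have dH: "derived_group H = H" by (simp add: derived_group_def)
  have "H \<cong> G" using G.iso_set_sym[OF iso] unfolding is_iso_def by blast
  moreover have "finite (carrier H)" using fin by (simp add: H_def monoid.defs A_def)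
  ultimately show ?thesis unfolding D_realisable_def using grpH dH by metis
qed



lemma (in group) no_S3_derived:
  assumes m: "m \<in> derived G (carrier G)" and t: "t \<in> derived G (carrier G)"
    and nc: "m \<otimes> t \<noteq> t \<otimes> m" and m1: "m \<noteq> \<one>" and m3: "m \<otimes> m \<otimes> m = \<one>"
    and cubes: "\<And>y. y \<in> derived G (carrier G) \<Longrightarrow> y \<otimes> y \<otimes> y = \<one> \<Longrightarrow> y = \<one> \<or> y = m \<or> y = m \<otimes> m"
  shows False
proof -
  let ?D = "derived G (carrier G)"
  have canc1: "inv h \<otimes> (h \<otimes> x) = x" "h \<otimes> (inv h \<otimes> x) = x" if "h \<in> carrier G" "x \<in> carrier G" for h x
    using that by (simp_all add: m_assoc[symmetric])
  have Dn: "?D \<lhd> G" by (rule derived_is_normal[OF normal_self])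
  have Dsub: "?D \<subseteq> carrier G" by (rule derived_in_carrier) simp
  have mc: "m \<in> carrier G" using m Dsub by blast
  have mm: "m \<otimes> m = inv m"
    using m3 mc by (metis inv_equality m_closed)
  have mneq: "inv m \<noteq> m"
  proof
    assume "inv m = m"
    then have "m \<otimes> m = m \<otimes> inv m" by simp
    then have mm1: "m \<otimes> m = \<one>" using mc by simp
    have "m = \<one>" using m3 mm1 mc by (metis l_one)
    then show False using m1 by simp
  qed
  define s where "s h \<longleftrightarrow> h \<otimes> m \<otimes> inv h = m" for h
  have conj: "h \<otimes> m \<otimes> inv h = m \<or> h \<otimes> m \<otimes> inv h = inv m" if h: "h \<in> carrier G" for h
  proof -
    let ?y = "h \<otimes> m \<otimes> inv h"
    have yD: "?y \<in> ?D" using normal.inv_op_closed2[OF Dn h m] .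
    have "?y \<otimes> ?y \<otimes> ?y = h \<otimes> (m \<otimes> m \<otimes> m) \<otimes> inv h"
      using h mc by (simp add: m_assoc canc1)
    then have y3: "?y \<otimes> ?y \<otimes> ?y = \<one>" using m3 h by simp
    have ny:  "?y \<noteq> \<one>"
    proof
      assume "?y = \<one>"
      have "h \<otimes> m = h \<otimes> m \<otimes> inv h \<otimes> h" using h mc by (simp add: m_assoc)
      also have "\<dots> = \<one> \<otimes> h" by (simp only: \<open>?y = \<one>\<close>)
      also have "\<dots> = h \<otimes> \<one>" using h by simp
      finally have "h \<otimes> m = h \<otimes> \<one>" .
      then have "m = \<one>" using h mc by (simp only: l_cancel one_closed)
      then show False using m1 by simp
    qed
    have "?y = \<one> \<or> ?y = m \<or> ?y = m \<otimes> m" using cubes[OF yD y3] .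
    then show ?thesis using ny mm by argo
  qed
  have sinv: "\<not> s h \<Longrightarrow> h \<otimes> m \<otimes> inv h = inv m" if "h \<in> carrier G" for h
    using conj[OF that] s_def by blast
  have conj_inv: "h \<otimes> inv m \<otimes> inv h = inv (h \<otimes> m \<otimes> inv h)" if h: "h \<in> carrier G" for h
    using h mc by (simp add: inv_mult_group m_assoc)
  have smult: "s (a \<otimes> b) \<longleftrightarrow> (s a \<longleftrightarrow> s b)" if a: "a \<in> carrier G" and b: "b \<in> carrier G" for a b
  proof -
    have e: "(a \<otimes> b) \<otimes> m \<otimes> inv (a \<otimes> b) = a \<otimes> (b \<otimes> m \<otimes> inv b) \<otimes> inv a"
      using a b mc by (simp add: inv_mult_group m_assoc)
    show ?thesis
    proof (cases "s b")
      case True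
      then show ?thesis using e s_def by simp
    next
      case False
      then have e2: "(a \<otimes> b) \<otimes> m \<otimes> inv (a \<otimes> b) = inv (a \<otimes> m \<otimes> inv a)"
        using e sinv[OF b] conj_inv[OF a] by simp
      show ?thesis
      proof (cases "s a")
        case True
        then show ?thesis using e2 False s_def mneq by simp
      next
        case False2: False
        then show ?thesis using e2 False sinv[OF a] s_def mc by simp
      qed
    qed
  qed
  have s1: "s \<one>" using s_def mc by simp
  have sinv2: "s (inv a) \<longleftrightarrow> s a" if a: "a \<in> carrier G" for a
    using smult[OF a inv_closed[OF a]] a s1 by auto
  define Z where "Z = {x \<in> carrier G. x \<otimes> m = m \<otimes> x}"
  have sZ: "x \<in> Z" if "x \<in> carrier G" "s x" for x
  proof -
    have "x \<otimes> m \<otimes> inv x \<otimes> x = m \<otimes> x" using that s_def by simp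
    then have "x \<otimes> m = m \<otimes> x" using that mc by (simp add: m_assoc)
    then show ?thesis using that Z_def by simp
  qed
  have Zsub: "subgroup Z G"
  proof
    show "Z \<subseteq> carrier G" using Z_def by blast
    show "\<one> \<in> Z" using Z_def mc by simp
    fix x y assume x: "x \<in> Z" and y: "y \<in> Z"
    then have xc: "x \<in> carrier G" and yc: "y \<in> carrier G" and xm: "x \<otimes> m = m \<otimes> x" and ym: "y \<otimes> m = m \<otimes> y"
      using Z_def by auto
    have "x \<otimes> y \<otimes> m = x \<otimes> (y \<otimes> m)" using xc yc mc by (simp add: m_assoc)
    also have "\<dots> = x \<otimes> m \<otimes> y" using xc yc mc ym by (simp add: m_assoc)
    also have "\<dots> = m \<otimes> (x \<otimes> y)" using xc yc mc xm by (simp add: m_assoc)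
    finally show "x \<otimes> y \<in> Z" using Z_def xc yc by simp
  next
    fix x assume x: "x \<in> Z"
    then have xc: "x \<in> carrier G" and xm: "x \<otimes> m = m \<otimes> x" using Z_def by auto
    have "inv x \<otimes> m = inv x \<otimes> (m \<otimes> x) \<otimes> inv x" using xc mc by (simp add: m_assoc)
    also have "\<dots> = inv x \<otimes> (x \<otimes> m) \<otimes> inv x" using xm by simp
    also have "\<dots> = m \<otimes> inv x" using xc mc by (simp add: m_assoc canc1)
    finally have "inv x \<otimes> m = m \<otimes> inv x" .
    then show "inv x \<in> Z" using Z_def xc by simp
  qed
  have "derived_set G (carrier G) \<subseteq> Z"
  proof
    fix x assume "x \<in> derived_set G (carrier G)"
    then obtain a b where ab: "a \<in> carrier G" "b \<in> carrier G" "x = a \<otimes> b \<otimes> inv a \<otimes> inv b" by blast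
    have "s x" using ab smult sinv2 by (simp add: m_closed inv_closed) blast
    then show "x \<in> Z" using sZ ab by simp
  qed
  then have "?D \<subseteq> Z" using generate_subgroup_incl[OF _ Zsub] unfolding derived_def by blast
  then have "t \<otimes> m = m \<otimes> t" using t Z_def by blast
  then show False using nc by simp
qed


definition "pc1 = transpose (1::nat) 2 \<circ> transpose 2 3"
definition "pc2 = transpose (2::nat) 3 \<circ> transpose 1 2"
definition "pr1 = transpose (1::nat) 2 \<circ> transpose 4 5"
definition "pr2 = transpose (2::nat) 3 \<circ> transpose 4 5"
definition "pr3 = transpose (1::nat) 3 \<circ> transpose 4 5"
lemmas pdefs = pc1_def pc2_def pr1_def pr2_def pr3_def
lemma ptab:
  "pc1 \<circ> pc1 = pc2"
  "pc1 \<circ> pc2 = id"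
  "pc1 \<circ> pr1 = pr3"
  "pc1 \<circ> pr2 = pr1"
  "pc1 \<circ> pr3 = pr2"
  "pc2 \<circ> pc1 = id"
  "pc2 \<circ> pc2 = pc1"
  "pc2 \<circ> pr1 = pr2"
  "pc2 \<circ> pr2 = pr3"
  "pc2 \<circ> pr3 = pr1"
  "pr1 \<circ> pc1 = pr2"
  "pr1 \<circ> pc2 = pr3"
  "pr1 \<circ> pr1 = id"
  "pr1 \<circ> pr2 = pc1"
  "pr1 \<circ> pr3 = pc2"
  "pr2 \<circ> pc1 = pr3"
  "pr2 \<circ> pc2 = pr1"
  "pr2 \<circ> pr1 = pc2"
  "pr2 \<circ> pr2 = id"
  "pr2 \<circ> pr3 = pc1"
  "pr3 \<circ> pc1 = pr1"
  "pr3 \<circ> pc2 = pr2"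
  "pr3 \<circ> pr1 = pc1"
  "pr3 \<circ> pr2 = pc2"
  "pr3 \<circ> pr3 = id"
  by (auto simp: pdefs fun_eq_iff transpose_def)
lemma pd_e0_c1 [simp]: "id \<noteq> pc1" "pc1 \<noteq> id"
proof -
  have "id (1::nat) \<noteq> pc1 1" by (simp add: pdefs transpose_def)
  then show "id \<noteq> pc1" "pc1 \<noteq> id" by metis+
qed
lemma pd_e0_c2 [simp]: "id \<noteq> pc2" "pc2 \<noteq> id"
proof -
  have "id (1::nat) \<noteq> pc2 1" by (simp add: pdefs transpose_def)
  then show "id \<noteq> pc2" "pc2 \<noteq> id" by metis+
qed
lemma pd_e0_r1 [simp]: "id \<noteq> pr1" "pr1 \<noteq> id"
proof -
  have "id (1::nat) \<noteq> pr1 1" by (simp add: pdefs transpose_def)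
  then show "id \<noteq> pr1" "pr1 \<noteq> id" by metis+
qed
lemma pd_e0_r2 [simp]: "id \<noteq> pr2" "pr2 \<noteq> id"
proof -
  have "id (2::nat) \<noteq> pr2 2" by (simp add: pdefs transpose_def)
  then show "id \<noteq> pr2" "pr2 \<noteq> id" by metis+
qed
lemma pd_e0_r3 [simp]: "id \<noteq> pr3" "pr3 \<noteq> id"
proof -
  have "id (1::nat) \<noteq> pr3 1" by (simp add: pdefs transpose_def)
  then show "id \<noteq> pr3" "pr3 \<noteq> id" by metis+
qed
lemma pd_c1_c2 [simp]: "pc1 \<noteq> pc2" "pc2 \<noteq> pc1"
proof -
  have "pc1 (1::nat) \<noteq> pc2 1" by (simp add: pdefs transpose_def)
  then show "pc1 \<noteq> pc2" "pc2 \<noteq> pc1" by metis+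
qed
lemma pd_c1_r1 [simp]: "pc1 \<noteq> pr1" "pr1 \<noteq> pc1"
proof -
  have "pc1 (2::nat) \<noteq> pr1 2" by (simp add: pdefs transpose_def)
  then show "pc1 \<noteq> pr1" "pr1 \<noteq> pc1" by metis+
qed
lemma pd_c1_r2 [simp]: "pc1 \<noteq> pr2" "pr2 \<noteq> pc1"
proof -
  have "pc1 (1::nat) \<noteq> pr2 1" by (simp add: pdefs transpose_def)
  then show "pc1 \<noteq> pr2" "pr2 \<noteq> pc1" by metis+
qed
lemma pd_c1_r3 [simp]: "pc1 \<noteq> pr3" "pr3 \<noteq> pc1"
proof -
  have "pc1 (1::nat) \<noteq> pr3 1" by (simp add: pdefs transpose_def)
  then show "pc1 \<noteq> pr3" "pr3 \<noteq> pc1" by metis+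
qed
lemma pd_c2_r1 [simp]: "pc2 \<noteq> pr1" "pr1 \<noteq> pc2"
proof -
  have "pc2 (1::nat) \<noteq> pr1 1" by (simp add: pdefs transpose_def)
  then show "pc2 \<noteq> pr1" "pr1 \<noteq> pc2" by metis+
qed
lemma pd_c2_r2 [simp]: "pc2 \<noteq> pr2" "pr2 \<noteq> pc2"
proof -
  have "pc2 (1::nat) \<noteq> pr2 1" by (simp add: pdefs transpose_def)
  then show "pc2 \<noteq> pr2" "pr2 \<noteq> pc2" by metis+
qed
lemma pd_c2_r3 [simp]: "pc2 \<noteq> pr3" "pr3 \<noteq> pc2"
proof -
  have "pc2 (2::nat) \<noteq> pr3 2" by (simp add: pdefs transpose_def)
  then show "pc2 \<noteq> pr3" "pr3 \<noteq> pc2" by metis+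
qed
lemma pd_r1_r2 [simp]: "pr1 \<noteq> pr2" "pr2 \<noteq> pr1"
proof -
  have "pr1 (1::nat) \<noteq> pr2 1" by (simp add: pdefs transpose_def)
  then show "pr1 \<noteq> pr2" "pr2 \<noteq> pr1" by metis+
qed
lemma pd_r1_r3 [simp]: "pr1 \<noteq> pr3" "pr3 \<noteq> pr1"
proof -
  have "pr1 (1::nat) \<noteq> pr3 1" by (simp add: pdefs transpose_def)
  then show "pr1 \<noteq> pr3" "pr3 \<noteq> pr1" by metis+
qed
lemma pd_r2_r3 [simp]: "pr2 \<noteq> pr3" "pr3 \<noteq> pr2"
proof -
  have "pr2 (1::nat) \<noteq> pr3 1" by (simp add: pdefs transpose_def)
  then show "pr2 \<noteq> pr3" "pr3 \<noteq> pr2" by metis+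
qed


definition "S3 = {id, pc1, pc2, pr1, pr2, pr3}"

lemma perm_two:
  assumes "a \<in> S" "b \<in> S" "c \<in> S" "d \<in> S" "a \<noteq> b" "c \<noteq> d"
  shows "(transpose a b \<circ> transpose c d) permutes S \<and> evenperm (transpose a b \<circ> transpose c d)"
  using assms by (simp add: permutes_compose permutes_swap_id evenperm_comp permutation_swap_id evenperm_swap)

lemma S3_sub:
  assumes "n \<ge> 5" shows "S3 \<subseteq> carrier (alt_group n)"
proof -
  have in_n: "(1::nat) \<in> {1..n}" "(2::nat) \<in> {1..n}" "(3::nat) \<in> {1..n}" "(4::nat) \<in> {1..n}" "(5::nat) \<in> {1..n}"
    using assms by auto
  show ?thesis
    unfolding S3_def insert_subset alt_group_carrier pdefs
    using perm_two[OF in_n(1,2,2,3)] perm_two[OF in_n(2,3,1,2)] perm_two[OF in_n(1,2,4,5)]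
      perm_two[OF in_n(2,3,4,5)] perm_two[OF in_n(1,3,4,5)]
    by (simp add: permutes_id)
qed

lemma S3_cases: "x \<in> S3 \<Longrightarrow> x = id \<or> x = pc1 \<or> x = pc2 \<or> x = pr1 \<or> x = pr2 \<or> x = pr3"
  by (simp add: S3_def)

lemma S3_closed: assumes "x \<in> S3" "y \<in> S3" shows "x \<circ> y \<in> S3"
proof -
  have "(x = id \<or> x = pc1 \<or> x = pc2 \<or> x = pr1 \<or> x = pr2 \<or> x = pr3) \<and>
      (y = id \<or> y = pc1 \<or> y = pc2 \<or> y = pr1 \<or> y = pr2 \<or> y = pr3)" using assms by (simp add: S3_def)
  then show "x \<circ> y \<in> S3" unfolding S3_def by (elim conjE disjE) (simp_all add: ptab)
qed

lemma S3_subgroup: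
  assumes "n \<ge> 5" shows "subgroup S3 (alt_group n)"
proof -
  interpret A: group "alt_group n" by (rule alt_group_is_group)
  have sub: "S3 \<subseteq> carrier (alt_group n)" by (rule S3_sub[OF assms])
  show ?thesis
  proof
    show "S3 \<subseteq> carrier (alt_group n)" by (rule sub)
    show "\<one>\<^bsub>alt_group n\<^esub> \<in> S3" by (simp add: alt_group_one S3_def)
    fix x y assume "x \<in> S3" "y \<in> S3"
    then have "(x = id \<or> x = pc1 \<or> x = pc2 \<or> x = pr1 \<or> x = pr2 \<or> x = pr3) \<and>
      (y = id \<or> y = pc1 \<or> y = pc2 \<or> y = pr1 \<or> y = pr2 \<or> y = pr3)" by (simp add: S3_def)
    then have "x \<circ> y \<in> S3" unfolding S3_def by (elim conjE disjE) (simp_all add: ptab)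
    then show "x \<otimes>\<^bsub>alt_group n\<^esub> y \<in> S3" by (simp add: alt_group_mult)
  next
    fix x assume x: "x \<in> S3"
    then have "x = id \<or> x = pc1 \<or> x = pc2 \<or> x = pr1 \<or> x = pr2 \<or> x = pr3" by (simp add: S3_def)
    then have "\<exists>y\<in>S3. y \<circ> x = id" unfolding S3_def by (elim disjE) (simp_all add: ptab)
    then obtain y where y: "y \<in> S3" "y \<circ> x = id" by blast
    have "inv\<^bsub>alt_group n\<^esub> x = y"
      using A.inv_equality[of y x] y x sub by (simp add: alt_group_mult alt_group_one subset_iff)
    then show "inv\<^bsub>alt_group n\<^esub> x \<in> S3" using y by simp
  qed
qed


lemma not_complete:
  assumes "n \<ge> 5" shows "\<not> completely_D_realisable (alt_group n)"
proof
  assume "completely_D_realisable (alt_group n)"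
  then obtain H :: "nat monoid" where grpH: "group H" and cond: "\<forall>G1. subgroup G1 (alt_group n) \<longrightarrow>
     (\<exists>H1. subgroup H1 H \<and> derived_group (H\<lparr>carrier := H1\<rparr>) \<cong> (alt_group n)\<lparr>carrier := G1\<rparr>)"
    unfolding completely_D_realisable_def by blast
  obtain H1 where H1: "subgroup H1 H" and iso: "derived_group (H\<lparr>carrier := H1\<rparr>) \<cong> (alt_group n)\<lparr>carrier := S3\<rparr>"
    using cond S3_subgroup[OF assms] by blast
  define K where "K = H\<lparr>carrier := H1\<rparr>"
  have grpK: "group K" using group.subgroup_imp_group[OF grpH H1] K_def by simp
  interpret K: group K by (rule grpK)
  define D where "D = derived K (carrier K)"
  have Dsg: "subgroup D K" using K.derived_is_subgroup D_def by simp
  have grpDg: "group (derived_group K)" using K.subgroup_imp_group[OF Dsg] by (simp add: derived_group_def D_def)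
  define G' where "G' = (alt_group n)\<lparr>carrier := S3\<rparr>"
  have grpG': "group G'" using group.subgroup_imp_group[OF alt_group_is_group S3_subgroup[OF assms]] G'_def by simp
  obtain \<phi> where \<phi>: "\<phi> \<in> iso (derived_group K) G'" using iso unfolding is_iso_def K_def G'_def by blast
  define \<psi> where "\<psi> = inv_into (carrier (derived_group K)) \<phi>"
  have \<psi>: "\<psi> \<in> iso G' (derived_group K)" using group.iso_set_sym[OF grpDg \<phi>] \<psi>_def by simp
  have carrDg: "carrier (derived_group K) = D" by (simp add: derived_group_def D_def)
  have carrG': "carrier G' = S3" by (simp add: G'_def)
  have multG': "monoid.mult G' = (\<circ>)" by (simp add: G'_def alt_group_mult)
  have oneG': "monoid.one G' = id" by (simp add: G'_def alt_group_one)
  have multDg: "monoid.mult (derived_group K) = monoid.mult K" by (simp add: derived_group_def)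
  have oneDg: "monoid.one (derived_group K) = monoid.one K" by (simp add: derived_group_def)
  have bij: "bij_betw \<psi> S3 D" using \<psi> carrDg carrG' by (simp add: iso_def)
  then have inj: "inj_on \<psi> S3" and img: "\<psi> ` S3 = D" by (auto simp: bij_betw_def)
  have hom: "\<psi> (x \<circ> y) = \<psi> x \<otimes>\<^bsub>K\<^esub> \<psi> y" if "x \<in> S3" "y \<in> S3" for x y
    using \<psi> that carrG' multG' multDg unfolding iso_def hom_def by auto
  have one: "\<psi> id = \<one>\<^bsub>K\<^esub>"
    using hom_one[of \<psi> G' "derived_group K"] \<psi> grpG' grpDg oneG' oneDg by (simp add: iso_def)
  have inS: "id \<in> S3" "pc1 \<in> S3" "pc2 \<in> S3" "pr1 \<in> S3" "pr2 \<in> S3" "pr3 \<in> S3" by (simp_all add: S3_def)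
  have injD: "\<psi> a = \<psi> b \<longleftrightarrow> a = b" if "a \<in> S3" "b \<in> S3" for a b
    using inj that by (auto simp: inj_on_def)
  define m where "m = \<psi> pc1"
  define t where "t = \<psi> pr1"
  have mD: "m \<in> D" using img inS m_def by blast
  have tD: "t \<in> D" using img inS t_def by blast
  have "m \<otimes>\<^bsub>K\<^esub> t = \<psi> (pc1 \<circ> pr1)" using hom inS m_def t_def by simp
  moreover have "t \<otimes>\<^bsub>K\<^esub> m = \<psi> (pr1 \<circ> pc1)" using hom inS m_def t_def by simp
  ultimately have nc: "m \<otimes>\<^bsub>K\<^esub> t \<noteq> t \<otimes>\<^bsub>K\<^esub> m" using injD inS by (simp add: ptab)
  have m1: "m \<noteq> \<one>\<^bsub>K\<^esub>" using injD[OF inS(2) inS(1)] one m_def by simp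
  have mm: "m \<otimes>\<^bsub>K\<^esub> m = \<psi> pc2" using hom[of pc1 pc1] inS m_def by (simp add: ptab)
  have m3: "m \<otimes>\<^bsub>K\<^esub> m \<otimes>\<^bsub>K\<^esub> m = \<one>\<^bsub>K\<^esub>" using mm hom[of pc2 pc1] inS m_def one by (simp add: ptab)
  have cubes: "y = \<one>\<^bsub>K\<^esub> \<or> y = m \<or> y = m \<otimes>\<^bsub>K\<^esub> m"
    if yD: "y \<in> D" and y3: "y \<otimes>\<^bsub>K\<^esub> y \<otimes>\<^bsub>K\<^esub> y = \<one>\<^bsub>K\<^esub>" for y
  proof -
    obtain x where x: "x \<in> S3" "y = \<psi> x" using yD img by blast
    have "\<psi> (x \<circ> x \<circ> x) = y \<otimes>\<^bsub>K\<^esub> y \<otimes>\<^bsub>K\<^esub> y"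
      using hom[OF S3_closed[OF x(1) x(1)] x(1)] hom[OF x(1) x(1)] x(2) by simp
    then have "\<psi> (x \<circ> x \<circ> x) = \<psi> id" using y3 one by simp
    then have x3: "x \<circ> x \<circ> x = id" using injD[OF S3_closed[OF S3_closed[OF x(1) x(1)] x(1)] inS(1)] by simp
    from S3_cases[OF x(1)] show ?thesis
    proof (elim disjE)
      assume "x = id" then show ?thesis using x one by simp
    next
      assume "x = pc1" then show ?thesis using x m_def by simp
    next
      assume "x = pc2" then show ?thesis using x mm by simp
    next
      assume "x = pr1" then show ?thesis using x3 by (simp add: ptab)
    next
      assume "x = pr2" then show ?thesis using x3 by (simp add: ptab)
    next
      assume "x = pr3" then show ?thesis using x3 by (simp add: ptab)
    qed
  qed
  show False by (rule K.no_S3_derived[OF mD[unfolded D_def] tD[unfolded D_def] nc m1 m3 cubes[unfolded D_def]])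
qed


theorem theorem3p2:
  fixes n :: nat
  assumes "n \<ge> 5"
  shows "D_realisable (alt_group n) \<and> \<not> completely_D_realisable (alt_group n)"
proof
  show "D_realisable (alt_group n)"
    by (rule perfect_D_realisable[OF alt_group_is_group _ derived_alt_group_const[OF assms]])
       (rule finite_subset[OF _ finite_permutations[OF finite_atLeastAtMost[of 1 n]]], auto simp: alt_group_carrier)
  show "\<not> completely_D_realisable (alt_group n)" by (rule not_complete[OF assms])
qed

end
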